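(* Let $K\ge 3$, $d\in\mathbb{N}$, $\eta>0$, and for each $k\in[K]=\{1,\dots,K\}$ let $n_k\in\mathbb{N}$ and points $x^k_1,\dots,x^k_{n_k}\in\mathbb{R}^d$ be given. Indices of marginals are taken cyclically: $K+1$ means $1$ and $0$ means $K$. For $\ell,t\in[K]$ define the matrix $\mathcal{K}^{(\ell,t)}\in\mathbb{R}^{n_\ell\times n_t}$ by $\mathcal{K}^{(\ell,t)}_{i,j}=\exp\!\big(-\tfrac1\eta\|x^\ell_i-x^t_j\|_2^2\big)$. Let $\mathcal{K}\in\mathbb{R}^{n_1\times\cdots\times n_K}$ be the kernel tensor of the circle-structured cost, $$\mathcal{K}_{i_1,\dots,i_K}=\exp\!\Big(-\tfrac1\eta\sum_{k=1}^{K}\|x^k_{i_k}-x^{k+1}_{i_{k+1}}\|_2^2\Big)=\prod_{k=1}^K\mathcal{K}^{(k,k+1)}_{i_k,i_{k+1}},$$ let $\phi^k\in\mathbb{R}^{n_k}$, $k\in[K]$, be arbitrary vectors and $\Phi=\bigotimes_{k=1}^K\phi^k$, i.e. $\Phi_{i_1,\dots,i_K}=\prod_{k=1}^K\phi^k_{i_k}$. For distinct $\ell,t\in[K]$ define $d(\ell,t)=t-\ell$ if $t\ge \ell$ and $d(\ell,t)=K-\ell+t$ otherwise, and define matrices $\alpha^{(\ell,t)}\in\mathbb{R}^{n_\ell\times n_t}$ recursively by $$\alpha^{(\ell,t)}=\begin{cases}\mathcal{K}^{(\ell,t)} & \text{if } d(\ell,t)=1,\\ \mathcal{K}^{(\ell,\ell+1)}\big(\phi^{\ell+1}\odot\alpha^{(\ell+1,t)}\big)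 & \text{otherwise.}\end{cases}$$ Then for every $k\in[K]$, $$P_k(\mathcal{K}\odot\Phi)=\Big(\big(\phi^k\odot\mathcal{K}^{(k,k+1)}\big)\odot\big(\phi^{k+1}\odot\alpha^{(k+1,k)}\big)^{\intercal}\Big)\mathbf{1}_{n_{k+1}},$$ i.e. $[P_k(\mathcal{K}\odot\Phi)]_{i}=\phi^k_{i}\sum_{j=1}^{n_{k+1}}\mathcal{K}^{(k,k+1)}_{i,j}\,\phi^{k+1}_j\,\alpha^{(k+1,k)}_{j,i}$ for $i\in[n_k]$.
   Context: $P_k$ denotes the $k$-th marginal projection of a tensor $T\in\mathbb{R}^{n_1\times\cdots\times n_K}$: $[P_k(T)]_{i}=\sum T_{i_1,\dots,i_K}$, the sum running over all indices $i_\ell\in[n_\ell]$, $\ell\ne k$, with $i_k=i$ fixed. For tensors of equal size, $\odot$ is the entrywise (Hadamard) product. For a vector $v\in\mathbb{R}^n$ and a matrix $A\in\mathbb{R}^{n\times m}$, $v\odot A$ denotes the matrix with entries $v_iA_{ij}$ (row scaling, $\mathrm{diag}(v)A$). $\mathbf{1}_{n}$ is the all-ones vector in $\mathbb{R}^{n}$. *)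

theory Defs
  imports "HOL-Analysis.Analysis"
begin

text \<open>Marginals are indexed by [K] = {1..K}; the points of marginal k are
  x k 1, ..., x k (n k).  Vectors in R^(n_k) are functions nat => real on {1..n k},
  matrices are functions nat => nat => real, tensors are functions on index tuples.\<close>

definition cyc_succ :: "nat \<Rightarrow> nat \<Rightarrow> nat" where
  "cyc_succ K k = (if k = K then 1 else k + 1)"

definition tuples :: "nat \<Rightarrow> (nat \<Rightarrow> nat) \<Rightarrow> (nat \<Rightarrow> nat) set" where
  "tuples K n = PiE {1..K} (\<lambda>k. {1..n k})"

definition marg :: "nat \<Rightarrow> (nat \<Rightarrow> nat) \<Rightarrow> nat \<Rightarrow> ((nat \<Rightarrow> nat) \<Rightarrow> real) \<Rightarrow> nat \<Rightarrow> real" where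
  "marg K n k T i = (\<Sum>\<iota>\<in>{\<iota>\<in>tuples K n. \<iota> k = i}. T \<iota>)"

definition kmat :: "real \<Rightarrow> (nat \<Rightarrow> nat \<Rightarrow> 'a::euclidean_space) \<Rightarrow> nat \<Rightarrow> nat \<Rightarrow> nat \<Rightarrow> nat \<Rightarrow> real" where
  "kmat \<eta> x l t i j = exp (- (1/\<eta>) * (norm (x l i - x t j))\<^sup>2)"

definition ktensor :: "nat \<Rightarrow> real \<Rightarrow> (nat \<Rightarrow> nat \<Rightarrow> 'a::euclidean_space) \<Rightarrow> (nat \<Rightarrow> nat) \<Rightarrow> real" where
  "ktensor K \<eta> x \<iota> =
     exp (- (1/\<eta>) * (\<Sum>k=1..K. (norm (x k (\<iota> k) - x (cyc_succ K k) (\<iota> (cyc_succ K k))))\<^sup>2))"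

definition phi_tensor :: "nat \<Rightarrow> (nat \<Rightarrow> nat \<Rightarrow> real) \<Rightarrow> (nat \<Rightarrow> nat) \<Rightarrow> real" where
  "phi_tensor K \<phi> \<iota> = (\<Prod>k=1..K. \<phi> k (\<iota> k))"

definition cdist :: "nat \<Rightarrow> nat \<Rightarrow> nat \<Rightarrow> nat" where
  "cdist K l t = (if t \<ge> l then t - l else K - l + t)"

text \<open>alpha_aux m l t is alpha^(l,t) for d(l,t) = m (recursion on the distance).\<close>
fun alpha_aux :: "nat \<Rightarrow> (nat \<Rightarrow> nat) \<Rightarrow> real \<Rightarrow> (nat \<Rightarrow> nat \<Rightarrow> 'a::euclidean_space) \<Rightarrow>
    (nat \<Rightarrow> nat \<Rightarrow> real) \<Rightarrow> nat \<Rightarrow> nat \<Rightarrow> nat \<Rightarrow> nat \<Rightarrow> nat \<Rightarrow> real" where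
  "alpha_aux K n \<eta> x \<phi> 0 l t = kmat \<eta> x l t"
| "alpha_aux K n \<eta> x \<phi> (Suc m) l t =
     (if m = 0 then kmat \<eta> x l t
      else (\<lambda>i j. \<Sum>r=1..n (cyc_succ K l).
              kmat \<eta> x l (cyc_succ K l) i r * (\<phi> (cyc_succ K l) r *
                alpha_aux K n \<eta> x \<phi> m (cyc_succ K l) t r j)))"

definition alpha :: "nat \<Rightarrow> (nat \<Rightarrow> nat) \<Rightarrow> real \<Rightarrow> (nat \<Rightarrow> nat \<Rightarrow> 'a::euclidean_space) \<Rightarrow>
    (nat \<Rightarrow> nat \<Rightarrow> real) \<Rightarrow> nat \<Rightarrow> nat \<Rightarrow> nat \<Rightarrow> nat \<Rightarrow> real" where
  "alpha K n \<eta> x \<phi> l t = alpha_aux K n \<eta> x \<phi> (cdist K l t) l t"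

end

theory Submission imports Defs begin

definition extuv :: "nat \<Rightarrow> nat \<Rightarrow> nat \<Rightarrow> (nat \<Rightarrow> nat) \<Rightarrow> nat \<Rightarrow> nat" where
  "extuv u v m g c = (if c = 0 then u else if c = m then v else g c)"

lemma sw: "(cyc_succ K ^^ c) (cyc_succ K l) = (cyc_succ K ^^ Suc c) l"
  by (simp add: funpow_swap1)

lemma L: "1 \<le> m \<Longrightarrow> alpha_aux K n \<eta> x \<phi> m l ((cyc_succ K ^^ m) l) u v =
  (\<Sum>g\<in>PiE {1..<m} (\<lambda>c. {1..n ((cyc_succ K ^^ c) l)}).
     (\<Prod>c<m. kmat \<eta> x ((cyc_succ K ^^ c) l) ((cyc_succ K ^^ Suc c) l) (extuv u v m g c) (extuv u v m g (Suc c))) *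
     (\<Prod>c\<in>{1..<m}. \<phi> ((cyc_succ K ^^ c) l) (g c)))"
proof (induction m arbitrary: l u v rule: nat_induct_at_least)
  case base
  then show ?case by (simp add: extuv_def)
next
  case (Suc m)
  let ?s = "cyc_succ K"
  let ?B' = "PiE {1..<m} (\<lambda>c. {1..n ((?s ^^ c) (?s l))})"
  let ?B = "PiE {1..<Suc m} (\<lambda>c. {1..n ((?s ^^ c) l)})"
  let ?F = "\<lambda>r g. (\<Prod>c<m. kmat \<eta> x ((?s ^^ c) (?s l)) ((?s ^^ Suc c) (?s l)) (extuv r v m g c) (extuv r v m g (Suc c))) *
     (\<Prod>c\<in>{1..<m}. \<phi> ((?s ^^ c) (?s l)) (g c))"
  let ?G = "\<lambda>h. (\<Prod>c<Suc m. kmat \<eta> x ((?s ^^ c) l) ((?s ^^ Suc c) l) (extuv u v (Suc m) h c) (extuv u v (Suc m) h (Suc c))) *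
     (\<Prod>c\<in>{1..<Suc m}. \<phi> ((?s ^^ c) l) (h c))"
  have t: "(?s ^^ Suc m) l = (?s ^^ m) (?s l)" by (simp only: funpow_Suc_right o_apply)
  have "alpha_aux K n \<eta> x \<phi> (Suc m) l ((?s ^^ Suc m) l) u v =
     (\<Sum>r=1..n (?s l). kmat \<eta> x l (?s l) u r * (\<phi> (?s l) r * (\<Sum>g\<in>?B'. ?F r g)))"
    using Suc by (simp only: t alpha_aux.simps) simp
  also have "\<dots> = (\<Sum>r=1..n (?s l). \<Sum>g\<in>?B'. kmat \<eta> x l (?s l) u r * \<phi> (?s l) r * ?F r g)"
    by (simp add: sum_distrib_left mult.assoc)
  also have "\<dots> = (\<Sum>(r,g)\<in>{1..n (?s l)} \<times> ?B'. kmat \<eta> x l (?s l) u r * \<phi> (?s l) r * ?F r g)"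
    by (rule sum.cartesian_product)
  also have "\<dots> = (\<Sum>h\<in>?B. ?G h)"
  proof (rule sum.reindex_bij_witness[where i="\<lambda>h. (h 1, \<lambda>c. if c \<in> {1..<m} then h (Suc c) else undefined)"
        and j="\<lambda>(r,g) c. if c = 1 then r else if c \<in> {2..<Suc m} then g (c - 1) else undefined"])
    fix h assume h: "h \<in> ?B"
    have hm: "\<And>c. c \<in> {1..<Suc m} \<Longrightarrow> h c \<in> {1..n ((?s^^c) l)}" using h by (auto simp: PiE_def)
    show "(\<lambda>(r,g) c. if c = 1 then r else if c \<in> {2..<Suc m} then g (c - 1) else undefined)
       (h 1, \<lambda>c. if c \<in> {1..<m} then h (Suc c) else undefined) = h"
      using h Suc.hyps by (auto simp: PiE_def extensional_def intro!: ext)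
    show "(h 1, \<lambda>c. if c \<in> {1..<m} then h (Suc c) else undefined) \<in> {1..n (?s l)} \<times> ?B'"
      using h Suc.hyps hm[of 1] hm[of "Suc _"] by (auto simp: PiE_def extensional_def sw)
  next
    fix a assume a: "a \<in> {1..n (?s l)} \<times> ?B'"
    obtain r g where rg: "a = (r,g)" by force
    show "(\<lambda>h. (h 1, \<lambda>c. if c \<in> {1..<m} then h (Suc c) else undefined))
      ((\<lambda>(r,g) c. if c = 1 then r else if c \<in> {2..<Suc m} then g (c - 1) else undefined) a) = a"
      using a Suc.hyps unfolding rg by (auto simp: PiE_def extensional_def)
    show "(\<lambda>(r,g) c. if c = 1 then r else if c \<in> {2..<Suc m} then g (c - 1) else undefined) a \<in> ?B"
      unfolding rg split
    proof (rule PiE_I)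
      fix c assume c: "c \<in> {1..<Suc m}"
      show "(if c = 1 then r else if c \<in> {2..<Suc m} then g (c - 1) else undefined) \<in> {1..n ((?s ^^ c) l)}"
      proof (cases "c = 1")
        case True then show ?thesis using a unfolding rg by auto
      next
        case False
        then have "c - 1 \<in> {1..<m}" "Suc (c - 1) = c" using c by auto
        then have "g (c - 1) \<in> {1..n ((?s ^^ (c - 1)) (?s l))}" using a unfolding rg by (auto simp: PiE_def)
        then show ?thesis using False c \<open>Suc (c - 1) = c\<close> by (simp only: sw) auto
      qed
    next
      fix c assume "c \<notin> {1..<Suc m}"
      then show "(if c = 1 then r else if c \<in> {2..<Suc m} then g (c - 1) else undefined) = undefined" using Suc.hyps by auto
    qed
    let ?h = "\<lambda>c. if c = 1 then r else if c \<in> {2..<Suc m} then g (c - 1) else undefined"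
    have e: "extuv u v (Suc m) ?h (Suc c) = extuv r v m g c" if "c \<le> m" for c
      using that Suc.hyps by (auto simp: extuv_def)
    have p1: "(\<Prod>c<Suc m. kmat \<eta> x ((?s ^^ c) l) ((?s ^^ Suc c) l) (extuv u v (Suc m) ?h c) (extuv u v (Suc m) ?h (Suc c)))
      = kmat \<eta> x l (?s l) u r * (\<Prod>c<m. kmat \<eta> x ((?s ^^ c) (?s l)) ((?s ^^ Suc c) (?s l)) (extuv r v m g c) (extuv r v m g (Suc c)))"
      unfolding prod.lessThan_Suc_shift
    proof (rule arg_cong2[where f="(*)"])
      show "kmat \<eta> x ((?s ^^ 0) l) ((?s ^^ Suc 0) l) (extuv u v (Suc m) ?h 0) (extuv u v (Suc m) ?h (Suc 0)) = kmat \<eta> x l (?s l) u r"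
        using e[of 0] by (simp add: extuv_def)
      show "(\<Prod>c<m. kmat \<eta> x ((?s ^^ Suc c) l) ((?s ^^ Suc (Suc c)) l) (extuv u v (Suc m) ?h (Suc c)) (extuv u v (Suc m) ?h (Suc (Suc c))))
        = (\<Prod>c<m. kmat \<eta> x ((?s ^^ c) (?s l)) ((?s ^^ Suc c) (?s l)) (extuv r v m g c) (extuv r v m g (Suc c)))"
      proof (rule prod.cong[OF refl])
        fix c assume "c \<in> {..<m}"
        then have "c \<le> m" "Suc c \<le> m" by auto
        then show "kmat \<eta> x ((?s ^^ Suc c) l) ((?s ^^ Suc (Suc c)) l) (extuv u v (Suc m) ?h (Suc c)) (extuv u v (Suc m) ?h (Suc (Suc c)))
          = kmat \<eta> x ((?s ^^ c) (?s l)) ((?s ^^ Suc c) (?s l)) (extuv r v m g c) (extuv r v m g (Suc c))"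
          by (simp only: e sw)
      qed
    qed
    have p2: "(\<Prod>c\<in>{1..<Suc m}. \<phi> ((?s ^^ c) l) (?h c)) = \<phi> (?s l) r * (\<Prod>c\<in>{1..<m}. \<phi> ((?s ^^ c) (?s l)) (g c))"
    proof -
      have "(\<Prod>c\<in>{1..<Suc m}. \<phi> ((?s ^^ c) l) (?h c)) = \<phi> ((?s ^^ 1) l) (?h 1) * (\<Prod>c\<in>{Suc 1..<Suc m}. \<phi> ((?s ^^ c) l) (?h c))"
        using Suc.hyps by (subst prod.atLeast_Suc_lessThan) auto
      also have "(\<Prod>c\<in>{Suc 1..<Suc m}. \<phi> ((?s ^^ c) l) (?h c)) = (\<Prod>c\<in>{1..<m}. \<phi> ((?s ^^ Suc c) l) (?h (Suc c)))"
        by (rule prod.shift_bounds_Suc_ivl)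
      also have "\<dots> = (\<Prod>c\<in>{1..<m}. \<phi> ((?s ^^ c) (?s l)) (g c))"
        by (rule prod.cong) (auto simp: sw simp del: funpow.simps)
      finally show ?thesis by simp
    qed
    show "?G ((\<lambda>(r,g) c. if c = 1 then r else if c \<in> {2..<Suc m} then g (c - 1) else undefined) a) =
       (case a of (r,g) \<Rightarrow> kmat \<eta> x l (?s l) u r * \<phi> (?s l) r * ?F r g)"
      unfolding rg split p1 p2 by (simp only: mult_ac)
  qed
  finally show ?case .
qed
lemma pform: "1 \<le> k \<Longrightarrow> k \<le> K \<Longrightarrow> (cyc_succ K ^^ c) k = (k - 1 + c) mod K + 1"
proof (induction c)
  case 0 then show ?case by simp
next
  case (Suc c)
  have "(cyc_succ K ^^ Suc c) k = cyc_succ K ((k - 1 + c) mod K + 1)" using Suc by simp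
  also have "\<dots> = Suc (k - 1 + c) mod K + 1" unfolding cyc_succ_def mod_Suc by auto
  also have "Suc (k - 1 + c) = k - 1 + Suc c" by simp
  finally show ?case .
qed

lemma prange: "1 \<le> k \<Longrightarrow> k \<le> K \<Longrightarrow> (cyc_succ K ^^ c) k \<in> {1..K}"
  using pform[of k K c] by (simp add: Suc_leI)

lemma pinv1: assumes "1 \<le> k" "k \<le> K" "c < K" shows "((cyc_succ K ^^ c) k + K - k) mod K = c"
proof -
  have "((cyc_succ K ^^ c) k + K - k) mod K = ((k - 1 + c) mod K + (K + 1 - k)) mod K"
    using assms by (simp add: pform)
  also have "\<dots> = ((k - 1 + c) + (K + 1 - k)) mod K" by (simp add: mod_add_left_eq)
  also have "(k - 1 + c) + (K + 1 - k) = c + K" using assms by simp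
  finally show ?thesis using assms by simp
qed

lemma pinv2: assumes "1 \<le> k" "k \<le> K" "1 \<le> k'" "k' \<le> K"
  shows "(cyc_succ K ^^ ((k' + K - k) mod K)) k = k'"
proof -
  have "(cyc_succ K ^^ ((k' + K - k) mod K)) k = (k - 1 + (k' + K - k) mod K) mod K + 1"
    using assms by (simp add: pform)
  also have "\<dots> = (k - 1 + (k' + K - k)) mod K + 1" by (simp add: mod_add_right_eq)
  also have "k - 1 + (k' + K - k) = (k' - 1) + K" using assms by simp
  also have "((k' - 1) + K) mod K + 1 = k'" using assms by (simp only: mod_add_self2) simp
  finally show ?thesis .
qed

lemma pK: "1 \<le> k \<Longrightarrow> k \<le> K \<Longrightarrow> (cyc_succ K ^^ K) k = k"
proof -
  assume a: "1 \<le> k" "k \<le> K"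
  have "(cyc_succ K ^^ K) k = ((k - 1) + K) mod K + 1" using pform[of k K K] a by simp
  also have "\<dots> = k" using a by (simp only: mod_add_self2) simp
  finally show ?thesis .
qed

lemma preidx: assumes "1 \<le> k" "k \<le> K"
  shows "(\<Prod>k'\<in>{1..K}. f k') = (\<Prod>c<K. f ((cyc_succ K ^^ c) k))"
  by (rule prod.reindex_bij_witness[where j="\<lambda>k'. (k' + K - k) mod K" and i="\<lambda>c. (cyc_succ K ^^ c) k"])
    (use assms pinv1 pinv2 prange in auto)

lemma ktensor_prod: "ktensor K \<eta> x \<iota> = (\<Prod>k'\<in>{1..K}. kmat \<eta> x k' (cyc_succ K k') (\<iota> k') (\<iota> (cyc_succ K k')))"
  unfolding ktensor_def kmat_def by (simp add: sum_distrib_left exp_sum)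

theorem theorem3:
  fixes K :: nat and n :: "nat \<Rightarrow> nat" and \<eta> :: real
    and x :: "nat \<Rightarrow> nat \<Rightarrow> 'a::euclidean_space"
    and \<phi> :: "nat \<Rightarrow> nat \<Rightarrow> real"
  assumes "K \<ge> 3" and "\<eta> > 0"
  shows "\<forall>k\<in>{1..K}. \<forall>i\<in>{1..n k}.
           marg K n k (\<lambda>\<iota>. ktensor K \<eta> x \<iota> * phi_tensor K \<phi> \<iota>) i =
           \<phi> k i * (\<Sum>j=1..n (cyc_succ K k).
              kmat \<eta> x k (cyc_succ K k) i j * \<phi> (cyc_succ K k) j *
              alpha K n \<eta> x \<phi> (cyc_succ K k) k j i)"
proof (intro ballI)
  fix k i assume k: "k \<in> {1..K}" and i: "i \<in> {1..n k}"
  let ?s = "cyc_succ K"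
  let ?B = "PiE {1..<K} (\<lambda>c. {1..n ((?s^^c) k)})"
  let ?A = "{\<iota> \<in> PiE {1..K} (\<lambda>k. {1..n k}). \<iota> k = i}"
  let ?G = "\<lambda>g. (\<Prod>c<K. kmat \<eta> x ((?s^^c) k) ((?s^^Suc c) k) (extuv i i K g c) (extuv i i K g (Suc c))) *
     (\<Prod>c\<in>{1..<K}. \<phi> ((?s^^c) k) (g c))"
  let ?jm = "\<lambda>g k'. if k' \<in> {1..K} then extuv i i K g ((k' + K - k) mod K) else undefined"
  let ?im = "\<lambda>\<iota> c. if c \<in> {1..<K} then \<iota> ((?s^^c) k) else undefined"
  have k1: "1 \<le> k" "k \<le> K" using k by auto
  have K1: "K = Suc (K - 1)" "K - 1 \<noteq> 0" "1 \<le> K" using assms by auto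
  have cd: "cdist K (?s k) k = K - 1" using k by (auto simp: cdist_def cyc_succ_def)
  have J: "?jm g ((?s^^c) k) = extuv i i K g c" if "c \<le> K" for g c
  proof (cases "c = K")
    case True
    then show ?thesis using k1 by (simp add: pK extuv_def)
  next
    case False
    then show ?thesis using that k1 prange[OF k1, of c] pinv1[OF k1, of c] by simp
  qed
  have "(\<Sum>\<iota>\<in>?A. ktensor K \<eta> x \<iota> * phi_tensor K \<phi> \<iota>) = (\<Sum>g\<in>?B. \<phi> k i * ?G g)"
  proof (rule sum.reindex_bij_witness[where j="?jm" and i="?im", symmetric])
    fix g assume g: "g \<in> ?B"
    show "?im (?jm g) = g"
    proof (rule ext)
      fix c show "?im (?jm g) c = g c"
      proof (cases "c \<in> {1..<K}")
        case True
        then show ?thesis using J[of c g] by (simp add: extuv_def)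
      next
        case False
        then show ?thesis using g by (auto simp: PiE_def extensional_def)
      qed
    qed
    show "?jm g \<in> ?A"
    proof
      show "?jm g \<in> PiE {1..K} (\<lambda>k. {1..n k}) \<and> ?jm g k = i"
      proof
        show "?jm g k = i" using J[of 0 g] k1 by (simp add: extuv_def)
        show "?jm g \<in> PiE {1..K} (\<lambda>k. {1..n k})"
        proof (rule PiE_I)
          fix k' assume k': "k' \<in> {1..K}"
          define c where "c = (k' + K - k) mod K"
          have c: "c < K" "(?s^^c) k = k'" using pinv2[OF k1, of k'] k' K1 by (auto simp: c_def)
          have "?jm g k' = extuv i i K g c" using k' by (simp add: c_def)
          moreover have "extuv i i K g c \<in> {1..n k'}"
          proof (cases "c = 0")
            case True then show ?thesis using c i by (simp add: extuv_def)
          next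
            case False then have "c \<in> {1..<K}" using c by auto
            then show ?thesis using g c False by (auto simp: extuv_def PiE_def)
          qed
          ultimately show "?jm g k' \<in> {1..n k'}" by simp
        qed auto
      qed
    qed
    have t1: "ktensor K \<eta> x (?jm g) = (\<Prod>c<K. kmat \<eta> x ((?s^^c) k) ((?s^^Suc c) k) (extuv i i K g c) (extuv i i K g (Suc c)))"
      unfolding ktensor_prod preidx[OF k1]
    proof (rule prod.cong[OF refl])
      fix c assume c: "c \<in> {..<K}"
      have e1: "?s ((?s^^c) k) = (?s^^Suc c) k" by simp
      have c1: "c \<le> K" "Suc c \<le> K" using c by auto
      show "kmat \<eta> x ((?s^^c) k) (?s ((?s^^c) k)) (?jm g ((?s^^c) k)) (?jm g (?s ((?s^^c) k))) =
        kmat \<eta> x ((?s^^c) k) ((?s^^Suc c) k) (extuv i i K g c) (extuv i i K g (Suc c))"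
        by (simp only: e1 J[OF c1(1)] J[OF c1(2)])
    qed
    have t2: "phi_tensor K \<phi> (?jm g) = \<phi> k i * (\<Prod>c\<in>{1..<K}. \<phi> ((?s^^c) k) (g c))"
    proof -
      have "phi_tensor K \<phi> (?jm g) = (\<Prod>c<K. \<phi> ((?s^^c) k) (extuv i i K g c))"
        unfolding phi_tensor_def preidx[OF k1] by (rule prod.cong[OF refl]) (use J in auto)
      also have "{..<K} = insert 0 {1..<K}" using K1 by auto
      also have "(\<Prod>c\<in>insert 0 {1..<K}. \<phi> ((?s^^c) k) (extuv i i K g c)) = \<phi> k i * (\<Prod>c\<in>{1..<K}. \<phi> ((?s^^c) k) (extuv i i K g c))"
        by (simp add: extuv_def)
      also have "(\<Prod>c\<in>{1..<K}. \<phi> ((?s^^c) k) (extuv i i K g c)) = (\<Prod>c\<in>{1..<K}. \<phi> ((?s^^c) k) (g c))"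
        by (rule prod.cong[OF refl]) (auto simp: extuv_def)
      finally show ?thesis .
    qed
    show "ktensor K \<eta> x (?jm g) * phi_tensor K \<phi> (?jm g) = \<phi> k i * ?G g"
      unfolding t1 t2 by (simp only: mult_ac)
  next
    fix \<iota> assume a: "\<iota> \<in> ?A"
    show "?im \<iota> \<in> ?B"
      using a prange[OF k1] by (auto simp: PiE_def extensional_def Pi_def)
    show "?jm (?im \<iota>) = \<iota>"
    proof (rule ext)
      fix k' show "?jm (?im \<iota>) k' = \<iota> k'"
      proof (cases "k' \<in> {1..K}")
        case True
        define c where "c = (k' + K - k) mod K"
        have c: "c < K" "(?s^^c) k = k'" using pinv2[OF k1, of k'] True K1 by (auto simp: c_def)
        have "?jm (?im \<iota>) k' = extuv i i K (?im \<iota>) c" using True by (simp add: c_def)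
        also have "\<dots> = \<iota> k'" using a c by (auto simp: extuv_def)
        finally show ?thesis .
      next
        case False then show ?thesis using a by (auto simp: PiE_def extensional_def)
      qed
    qed
  qed
  also have "\<dots> = \<phi> k i * alpha_aux K n \<eta> x \<phi> K k ((?s^^K) k) i i"
    using L[of K K n \<eta> x \<phi> k i i] K1 by (simp add: sum_distrib_left)
  also have "(?s^^K) k = k" using pK[OF k1] .
  also have "alpha_aux K n \<eta> x \<phi> K k k i i = alpha_aux K n \<eta> x \<phi> (Suc (K - 1)) k k i i"
    using K1 by simp
  also have "\<dots> = (\<Sum>j=1..n (?s k). kmat \<eta> x k (?s k) i j * \<phi> (?s k) j * alpha K n \<eta> x \<phi> (?s k) k j i)"
    unfolding alpha_aux.simps(2) alpha_def cd using K1(2) by (simp add: mult.assoc)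
  finally show "marg K n k (\<lambda>\<iota>. ktensor K \<eta> x \<iota> * phi_tensor K \<phi> \<iota>) i = \<phi> k i * (\<Sum>j=1..n (?s k). kmat \<eta> x k (?s k) i j * \<phi> (?s k) j * alpha K n \<eta> x \<phi> (?s k) k j i)"
    by (simp add: marg_def tuples_def)
qed

end
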